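(* Let $A$ be an evolution algebra with natural basis $B=\{e_i:i\in\Lambda\}$ and structure matrix $(\omega_{ki})$. Then $M$ is a maximal modular ideal of $A$ if and only if $M=\mathrm{lin}\{e_i:i\in\Lambda\setminus\{i_0\}\}$ for some $i_0\in\Lambda$ such that $\omega_{i_0i_0}\neq0$ and $i_0\notin D(k)$ for every $k\in\Lambda\setminus\{i_0\}$; in that case $\frac{1}{\omega_{i_0i_0}}e_{i_0}$ is a modular unit for $M$. Consequently every maximal modular ideal of $A$ has codimension one.
   Context: An evolution algebra is an algebra $A$ over $\mathbb{K}\in\{\mathbb{R},\mathbb{C}\}$ with a basis $\{e_i:i\in\Lambda\}$ (natural basis) with $e_ie_j=0$ for $i\neq j$; write $e_i^2=\sum_k\omega_{ki}e_k$. An ideal $M$ is modular if some $u\in A$ (modular unit) satisfies $a-au\in M$ for all $a\in A$; a maximal modular ideal is a proper modular ideal maximal among proper modular ideals. Descendents: $D^1(i)=\{j:\omega_{ji}\neq0\}$, $D^n(i)=\bigcup_{j\in D^{n-1}(i)}D^1(j)$, $D(i)=\bigcup_{n\ge1}D^n(i)$. *)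

theory Defs
  imports Complex_Main "HOL-Library.Function_Algebras"
begin

text \<open>Elements are finitely supported coefficient
functions 'i => K; the structure matrix is om k i (so e_i^2 = sum_k om k i e_k).\<close>

definition evo_carrier :: "('i \<Rightarrow> 'k::field) set" where
  "evo_carrier = {x. finite {i. x i \<noteq> 0}}"

definition evo_scale :: "'k::field \<Rightarrow> ('i \<Rightarrow> 'k) \<Rightarrow> ('i \<Rightarrow> 'k)" where
  "evo_scale c x = (\<lambda>j. c * x j)"

definition evo_basis :: "'i \<Rightarrow> ('i \<Rightarrow> 'k::field)" where
  "evo_basis i = (\<lambda>j. if j = i then 1 else 0)"

text \<open>Product: (sum a_i e_i)(sum b_j e_j) = sum_i a_i b_i e_i^2.\<close>
definition evo_mult :: "('i \<Rightarrow> 'i \<Rightarrow> 'k::field) \<Rightarrow> ('i \<Rightarrow> 'k) \<Rightarrow> ('i \<Rightarrow> 'k) \<Rightarrow> ('i \<Rightarrow> 'k)" where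
  "evo_mult om x y = (\<lambda>k. \<Sum>i\<in>{i. x i \<noteq> 0}. x i * y i * om k i)"

definition evo_ideal :: "('i \<Rightarrow> 'i \<Rightarrow> 'k::field) \<Rightarrow> ('i \<Rightarrow> 'k) set \<Rightarrow> bool" where
  "evo_ideal om M \<longleftrightarrow> M \<subseteq> evo_carrier \<and> module.subspace evo_scale M \<and>
     (\<forall>a\<in>evo_carrier. \<forall>m\<in>M. evo_mult om a m \<in> M \<and> evo_mult om m a \<in> M)"

definition evo_modular_unit :: "('i \<Rightarrow> 'i \<Rightarrow> 'k::field) \<Rightarrow> ('i \<Rightarrow> 'k) set \<Rightarrow> ('i \<Rightarrow> 'k) \<Rightarrow> bool" where
  "evo_modular_unit om M u \<longleftrightarrow> u \<in> evo_carrier \<and>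
     (\<forall>a\<in>evo_carrier. a - evo_mult om a u \<in> M)"

definition evo_modular_ideal :: "('i \<Rightarrow> 'i \<Rightarrow> 'k::field) \<Rightarrow> ('i \<Rightarrow> 'k) set \<Rightarrow> bool" where
  "evo_modular_ideal om M \<longleftrightarrow> evo_ideal om M \<and> (\<exists>u. evo_modular_unit om M u)"

definition evo_proper_modular :: "('i \<Rightarrow> 'i \<Rightarrow> 'k::field) \<Rightarrow> ('i \<Rightarrow> 'k) set \<Rightarrow> bool" where
  "evo_proper_modular om M \<longleftrightarrow> evo_modular_ideal om M \<and> M \<noteq> evo_carrier"

definition evo_maximal_modular :: "('i \<Rightarrow> 'i \<Rightarrow> 'k::field) \<Rightarrow> ('i \<Rightarrow> 'k) set \<Rightarrow> bool" where
  "evo_maximal_modular om M \<longleftrightarrow> evo_proper_modular om M \<and>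
     (\<forall>N. evo_proper_modular om N \<and> M \<subseteq> N \<longrightarrow> N = M)"

fun desc :: "('i \<Rightarrow> 'i \<Rightarrow> 'k::zero) \<Rightarrow> nat \<Rightarrow> 'i \<Rightarrow> 'i set" where
  "desc om 0 i = {}"
| "desc om (Suc 0) i = {j. om j i \<noteq> 0}"
| "desc om (Suc (Suc n)) i = (\<Union>j\<in>desc om (Suc n) i. {l. om l j \<noteq> 0})"

definition descendents :: "('i \<Rightarrow> 'i \<Rightarrow> 'k::zero) \<Rightarrow> 'i \<Rightarrow> 'i set" where
  "descendents om i = (\<Union>n\<in>{1..}. desc om n i)"

definition evo_codim_one :: "('i \<Rightarrow> 'k::field) set \<Rightarrow> bool" where
  "evo_codim_one M \<longleftrightarrow> (\<exists>v\<in>evo_carrier. v \<notin> M \<and>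
     (\<forall>a\<in>evo_carrier. \<exists>c. a - evo_scale c v \<in> M))"

end

theory Submission
  imports Defs
begin

interpretation E: module "evo_scale :: 'k::field \<Rightarrow> ('i \<Rightarrow> 'k) \<Rightarrow> _"
  by unfold_locales (auto simp: evo_scale_def fun_eq_iff algebra_simps)

lemma sum_fun_apply: "(sum f A) x = sum (\<lambda>i. f i x) A"
  by (induction A rule: infinite_finite_induct) auto

abbreviation H :: "'i \<Rightarrow> ('i \<Rightarrow> 'k::field) set" where
  "H i0 \<equiv> {x \<in> evo_carrier. x i0 = 0}"

lemma carrier_add: "x \<in> evo_carrier \<Longrightarrow> y \<in> evo_carrier \<Longrightarrow> x + y \<in> evo_carrier"
  unfolding evo_carrier_def mem_Collect_eq
  by (rule finite_subset[of _ "{i. x i \<noteq> 0} \<union> {i. y i \<noteq> 0}"]) auto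

lemma carrier_diff: "x \<in> evo_carrier \<Longrightarrow> y \<in> evo_carrier \<Longrightarrow> x - y \<in> evo_carrier"
  unfolding evo_carrier_def mem_Collect_eq
  by (rule finite_subset[of _ "{i. x i \<noteq> 0} \<union> {i. y i \<noteq> 0}"]) auto

lemma carrier_scale: "x \<in> evo_carrier \<Longrightarrow> evo_scale c x \<in> evo_carrier"
  unfolding evo_carrier_def evo_scale_def mem_Collect_eq
  by (rule finite_subset[of _ "{i. x i \<noteq> 0}"]) auto

lemma carrier_basis: "evo_basis i \<in> evo_carrier"
  unfolding evo_carrier_def evo_basis_def mem_Collect_eq
  by (rule finite_subset[of _ "{i}"]) auto

lemma carrier_zero: "0 \<in> evo_carrier"
  unfolding evo_carrier_def by simp

lemma H_subspace: "E.subspace (H i0)"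
  unfolding E.subspace_def
  by (auto simp: carrier_zero carrier_add carrier_scale) (simp add: evo_scale_def)

lemma carrier_expand:
  assumes "x \<in> evo_carrier"
  shows "x = (\<Sum>i\<in>{i. x i \<noteq> 0}. evo_scale (x i) (evo_basis i))"
proof
  fix j
  have fin: "finite {i. x i \<noteq> 0}" using assms by (simp add: evo_carrier_def)
  show "x j = (\<Sum>i\<in>{i. x i \<noteq> 0}. evo_scale (x i) (evo_basis i)) j"
    unfolding sum_fun_apply evo_scale_def evo_basis_def
    using fin by (simp add: if_distrib[of "\<lambda>t. _ * t"] sum.delta' cong: if_cong)
qed

lemma span_H: "E.span (evo_basis ` (UNIV - {i0})) = H i0"
proof
  show "E.span (evo_basis ` (UNIV - {i0})) \<subseteq> H i0"
    by (rule E.span_minimal) (auto simp: H_subspace carrier_basis, simp add: evo_basis_def)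
  show "H i0 \<subseteq> E.span (evo_basis ` (UNIV - {i0}))"
  proof
    fix x assume x: "x \<in> H i0"
    then have "x = (\<Sum>i\<in>{i. x i \<noteq> 0}. evo_scale (x i) (evo_basis i))"
      using carrier_expand by blast
    also have "\<dots> \<in> E.span (evo_basis ` (UNIV - {i0}))"
      using x by (intro E.span_sum E.span_scale E.span_base) auto
    finally show "x \<in> E.span (evo_basis ` (UNIV - {i0}))" .
  qed
qed

lemma mult_eq:
  assumes "finite F" "{i. x i \<noteq> 0} \<subseteq> F"
  shows "evo_mult om x y = (\<lambda>k. \<Sum>i\<in>F. x i * y i * om k i)"
  unfolding evo_mult_def
  by (rule ext, rule sum.mono_neutral_left) (use assms in auto)

lemma mult_comm:
  assumes "x \<in> evo_carrier" "y \<in> evo_carrier"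
  shows "evo_mult om x y = evo_mult om y x"
proof -
  let ?F = "{i. x i \<noteq> 0} \<union> {i. y i \<noteq> 0}"
  have f: "finite ?F" using assms by (simp add: evo_carrier_def)
  show ?thesis
    using mult_eq[OF f, of x om y] mult_eq[OF f, of y om x] by (auto simp: mult_ac)
qed

lemma if_mult0: "(if P then x else 0) * y = (if P then x*y else (0::'a::mult_zero))" by simp

lemma mult_basis:
  assumes "a \<in> evo_carrier"
  shows "evo_mult om a (evo_scale c (evo_basis j)) = evo_scale (a j * c) (\<lambda>k. om k j)"
proof -
  let ?F = "{i. a i \<noteq> 0} \<union> {j}"
  have f: "finite ?F" using assms by (simp add: evo_carrier_def)
  have "evo_mult om a (evo_scale c (evo_basis j)) = (\<lambda>k. \<Sum>i\<in>?F. a i * (evo_scale c (evo_basis j)) i * om k i)"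
    by (rule mult_eq[OF f]) auto
  then show ?thesis
    unfolding evo_scale_def evo_basis_def
    using f by (simp add: if_distrib[of "\<lambda>t. _ * t"] if_mult0 sum.delta' cong: if_cong)
qed

lemma mult_add:
  assumes "a \<in> evo_carrier"
  shows "evo_mult om a (x + y) = evo_mult om a x + evo_mult om a y"
proof -
  have f: "finite {i. a i \<noteq> 0}" using assms by (simp add: evo_carrier_def)
  show ?thesis unfolding mult_eq[OF f order_refl]
    by (auto simp: fun_eq_iff algebra_simps sum.distrib)
qed

lemma mult_scale:
  assumes "a \<in> evo_carrier"
  shows "evo_mult om a (evo_scale c x) = evo_scale c (evo_mult om a x)"
proof -
  have f: "finite {i. a i \<noteq> 0}" using assms by (simp add: evo_carrier_def)
  show ?thesis unfolding mult_eq[OF f order_refl] evo_scale_def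
    by (auto simp: fun_eq_iff algebra_simps sum_distrib_left)
qed

lemma mult_carrier:
  assumes fin: "\<forall>i. finite {k. om k i \<noteq> 0}"
    and "x \<in> evo_carrier"
  shows "evo_mult om x y \<in> evo_carrier"
proof -
  have f: "finite {i. x i \<noteq> 0}" using assms by (simp add: evo_carrier_def)
  have "{k. evo_mult om x y k \<noteq> 0} \<subseteq> (\<Union>i\<in>{i. x i \<noteq> 0}. {k. om k i \<noteq> 0})"
  proof
    fix k assume "k \<in> {k. evo_mult om x y k \<noteq> 0}"
    then have "(\<Sum>i\<in>{i. x i \<noteq> 0}. x i * y i * om k i) \<noteq> 0"
      by (simp add: evo_mult_def)
    then have "\<exists>i\<in>{i. x i \<noteq> 0}. x i * y i * om k i \<noteq> 0"
    proof (rule contrapos_np)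
      assume "\<not> (\<exists>i\<in>{i. x i \<noteq> 0}. x i * y i * om k i \<noteq> 0)"
      then have "\<forall>i\<in>{i. x i \<noteq> 0}. x i * y i * om k i = 0" by blast
      then show "(\<Sum>i\<in>{i. x i \<noteq> 0}. x i * y i * om k i) = 0" by (rule sum.neutral)
    qed
    then obtain i where i1: "i \<in> {i. x i \<noteq> 0}" and i2: "x i * y i * om k i \<noteq> 0"
      by blast
    from i2 have "om k i \<noteq> 0" by auto
    with i1 show "k \<in> (\<Union>i\<in>{i. x i \<noteq> 0}. {k. om k i \<noteq> 0})" by blast
  qed
  moreover have "finite (\<Union>i\<in>{i. x i \<noteq> 0}. {k. om k i \<noteq> 0})"
    using fin by (intro finite_UN_I[OF f]) blast
  ultimately have "finite {k. evo_mult om x y k \<noteq> 0}" by (rule finite_subset)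
  then show ?thesis unfolding evo_carrier_def by simp
qed

lemma scale0: "evo_scale 0 x = 0" by (simp add: evo_scale_def fun_eq_iff)
lemma scale1: "evo_scale 1 x = x" by (simp add: evo_scale_def fun_eq_iff)

lemma basis_mult:
  assumes "a \<in> evo_carrier"
  shows "evo_mult om a (evo_basis j) = evo_scale (a j) (\<lambda>k. om k j)"
  using mult_basis[OF assms, of om 1 j] by (simp add: scale1)

lemma desc_notin:
  assumes "\<forall>k. k \<noteq> i0 \<longrightarrow> om i0 k = 0" "k \<noteq> i0"
  shows "i0 \<notin> descendents om k"
proof -
  have "i0 \<notin> desc om (Suc n) k" for n
  proof (induction n)
    case 0 then show ?case using assms by simp
  next
    case (Suc n)
    show ?case
    proof
      assume "i0 \<in> desc om (Suc (Suc n)) k"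
      then obtain j where j: "j \<in> desc om (Suc n) k" "om i0 j \<noteq> 0" by auto
      then have "j = i0" using assms(1) by auto
      then show False using j Suc by simp
    qed
  qed
  then show ?thesis unfolding descendents_def
    by (auto simp: atLeast_def) (metis Suc_le_D)
qed

lemma desc_one:
  assumes "\<forall>k. k \<noteq> i0 \<longrightarrow> i0 \<notin> descendents om k" "k \<noteq> i0"
  shows "om i0 k = 0"
proof -
  have "desc om (Suc 0) k \<subseteq> descendents om k" unfolding descendents_def
    by (rule UN_upper) auto
  then show ?thesis using assms by auto
qed

lemma unit_lemma:
  fixes om :: "'i \<Rightarrow> 'i \<Rightarrow> 'k::field"
  assumes fin: "\<forall>i. finite {k. om k i \<noteq> 0}" and w: "om i0 i0 \<noteq> 0"
  shows "evo_modular_unit om (H i0) (evo_scale (1 / om i0 i0) (evo_basis i0))"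
  unfolding evo_modular_unit_def
proof (intro conjI ballI)
  show "evo_scale (1 / om i0 i0) (evo_basis i0) \<in> evo_carrier"
    by (simp add: carrier_scale carrier_basis)
  fix a :: "'i \<Rightarrow> 'k" assume a: "a \<in> evo_carrier"
  have e: "evo_mult om a (evo_scale (1 / om i0 i0) (evo_basis i0)) =
     evo_scale (a i0 * (1 / om i0 i0)) (\<lambda>k. om k i0)" by (rule mult_basis[OF a])
  have c: "a - evo_mult om a (evo_scale (1 / om i0 i0) (evo_basis i0)) \<in> evo_carrier"
    by (rule carrier_diff[OF a mult_carrier[OF fin a]])
  show "a - evo_mult om a (evo_scale (1 / om i0 i0) (evo_basis i0)) \<in> H i0"
    using c w unfolding e
    by (simp add: evo_scale_def)
qed

lemma H_ideal:
  fixes om :: "'i \<Rightarrow> 'i \<Rightarrow> 'k::field"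
  assumes fin: "\<forall>i. finite {k. om k i \<noteq> 0}" and z: "\<forall>k. k \<noteq> i0 \<longrightarrow> om i0 k = 0"
  shows "evo_ideal om (H i0)"
  unfolding evo_ideal_def
proof (intro conjI ballI)
  show "H i0 \<subseteq> evo_carrier" by auto
  show "E.subspace (H i0)" by (rule H_subspace)
  fix a m :: "'i \<Rightarrow> 'k" assume a: "a \<in> evo_carrier" and m: "m \<in> H i0"
  have am: "evo_mult om a m \<in> H i0"
  proof -
    have "evo_mult om a m i0 = (\<Sum>i\<in>{i. a i \<noteq> 0}. a i * m i * om i0 i)"
      by (simp add: evo_mult_def)
    also have "\<dots> = 0" by (rule sum.neutral) (use m z in auto)
    finally show ?thesis using mult_carrier[OF fin a] by simp
  qed
  then show "evo_mult om a m \<in> H i0" .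
  show "evo_mult om m a \<in> H i0" using am mult_comm[OF a, of m om] m by simp
qed

lemma H_maximal:
  fixes om :: "'i \<Rightarrow> 'i \<Rightarrow> 'k::field"
  assumes fin: "\<forall>i. finite {k. om k i \<noteq> 0}" and w: "om i0 i0 \<noteq> 0"
    and z: "\<forall>k. k \<noteq> i0 \<longrightarrow> om i0 k = 0"
  shows "evo_maximal_modular om (H i0)"
  unfolding evo_maximal_modular_def
proof (intro conjI allI impI)
  have "evo_basis i0 \<notin> H i0" by (simp add: evo_basis_def)
  then have "H i0 \<noteq> evo_carrier" using carrier_basis[of i0] by blast
  then show "evo_proper_modular om (H i0)"
    unfolding evo_proper_modular_def evo_modular_ideal_def
    using H_ideal[OF fin z] unit_lemma[OF fin w] carrier_basis[of i0]
    by (auto simp: evo_basis_def)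
  fix N assume N: "evo_proper_modular om N \<and> H i0 \<subseteq> N"
  then have Ni: "evo_ideal om N" and Nne: "N \<noteq> evo_carrier" and HN: "H i0 \<subseteq> N"
    by (auto simp: evo_proper_modular_def evo_modular_ideal_def)
  then have Nc: "N \<subseteq> evo_carrier" and Ns: "E.subspace N" by (auto simp: evo_ideal_def)
  show "N = H i0"
  proof (rule ccontr)
    assume "N \<noteq> H i0"
    then obtain x where x: "x \<in> N" "x \<notin> H i0" using HN by auto
    then have xc: "x \<in> evo_carrier" and xi: "x i0 \<noteq> 0" using Nc by auto
    have "evo_carrier \<subseteq> N"
    proof
      fix a :: "'i \<Rightarrow> 'k" assume a: "a \<in> evo_carrier"
      define c where "c = a i0 / x i0"
      have c1: "a - evo_scale c x \<in> evo_carrier" by (rule carrier_diff[OF a carrier_scale[OF xc]])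
      have c2: "(a - evo_scale c x) i0 = 0" using xi by (simp add: c_def evo_scale_def)
      have "a - evo_scale c x \<in> H i0" using c1 c2 by blast
      then have "(a - evo_scale c x) + evo_scale c x \<in> N"
        using HN x(1) E.subspace_add[OF Ns] E.subspace_scale[OF Ns] by blast
      then show "a \<in> N" by simp
    qed
    then show False using Nc Nne by auto
  qed
qed

lemma forward:
  fixes om :: "'i \<Rightarrow> 'i \<Rightarrow> 'k::field"
  assumes fin: "\<forall>i. finite {k. om k i \<noteq> 0}" and mx: "evo_maximal_modular om M"
  shows "\<exists>i0. om i0 i0 \<noteq> 0 \<and> (\<forall>k. k \<noteq> i0 \<longrightarrow> om i0 k = 0) \<and> M = H i0"
proof -
  from mx have Mi: "evo_ideal om M" and Mne: "M \<noteq> evo_carrier"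
    and mxl: "\<And>N. evo_proper_modular om N \<Longrightarrow> M \<subseteq> N \<Longrightarrow> N = M"
    by (auto simp: evo_maximal_modular_def evo_proper_modular_def evo_modular_ideal_def)
  from mx obtain u where u: "evo_modular_unit om M u"
    by (auto simp: evo_maximal_modular_def evo_proper_modular_def evo_modular_ideal_def)
  have uc: "u \<in> evo_carrier" and ua: "\<And>a::'i\<Rightarrow>'k. a \<in> evo_carrier \<Longrightarrow> a - evo_mult om a u \<in> M"
    using u by (auto simp: evo_modular_unit_def)
  have Mc: "M \<subseteq> evo_carrier" and Ms: "E.subspace M"
    and Mm: "\<And>(a::'i\<Rightarrow>'k) m. a \<in> evo_carrier \<Longrightarrow> m \<in> M \<Longrightarrow> evo_mult om a m \<in> M"
    using Mi by (auto simp: evo_ideal_def)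
  have stepa: "evo_basis j - evo_scale (u j) (\<lambda>k. om k j) \<in> M" for j
  proof -
    have "evo_mult om (evo_basis j) u = evo_mult om u (evo_basis j)"
      by (rule mult_comm[OF carrier_basis uc])
    also have "\<dots> = evo_scale (u j) (\<lambda>k. om k j)" by (rule basis_mult[OF uc])
    finally show ?thesis using ua[OF carrier_basis[of j]] by simp
  qed
  obtain i0 where i0: "evo_basis i0 \<notin> M"
  proof (rule ccontr)
    assume "\<not> thesis"
    then have allin: "evo_basis j \<in> M" for j using that by blast
    have "evo_carrier \<subseteq> M"
    proof
      fix a :: "'i \<Rightarrow> 'k" assume a: "a \<in> evo_carrier"
      have "(\<Sum>i\<in>{i. a i \<noteq> 0}. evo_scale (a i) (evo_basis i)) \<in> M"
        by (intro E.subspace_sum[OF Ms] E.subspace_scale[OF Ms] allin)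
      then show "a \<in> M" using carrier_expand[OF a] by simp
    qed
    then show False using Mc Mne by auto
  qed
  have cj: "evo_basis j \<in> M" if j: "j \<noteq> i0" for j
  proof (rule ccontr)
    assume ej: "evo_basis j \<notin> M"
    have uj: "u j \<noteq> 0"
    proof
      assume "u j = 0"
      then show False using stepa[of j] ej by (simp add: scale0)
    qed
    define N where "N = {x \<in> evo_carrier. \<exists>c. x - evo_scale c (evo_basis j) \<in> M}"
    have MN: "M \<subseteq> N" unfolding N_def using Mc by (auto intro!: exI[of _ 0] simp: scale0)
    have jN: "evo_basis j \<in> N" unfolding N_def
      using carrier_basis[of j] E.subspace_0[OF Ms] by (auto intro!: exI[of _ 1] simp: scale1)
    have Nsub: "E.subspace N"
      unfolding E.subspace_def
    proof (intro conjI ballI allI)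
      show "0 \<in> N" using MN E.subspace_0[OF Ms] by auto
    next
      fix x y assume x: "x \<in> N" and y: "y \<in> N"
      then obtain c1 c2 where c1: "x - evo_scale c1 (evo_basis j) \<in> M"
        and c2: "y - evo_scale c2 (evo_basis j) \<in> M" and xc: "x \<in> evo_carrier" and yc: "y \<in> evo_carrier"
        unfolding N_def by auto
      have "(x - evo_scale c1 (evo_basis j)) + (y - evo_scale c2 (evo_basis j)) \<in> M"
        using E.subspace_add[OF Ms c1 c2] .
      moreover have "(x - evo_scale c1 (evo_basis j)) + (y - evo_scale c2 (evo_basis j))
         = x + y - evo_scale (c1 + c2) (evo_basis j)"
        by (simp add: evo_scale_def fun_eq_iff algebra_simps)
      ultimately show "x + y \<in> N" unfolding N_def using carrier_add[OF xc yc] by auto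
    next
      fix c x assume x: "x \<in> N"
      then obtain c1 where c1: "x - evo_scale c1 (evo_basis j) \<in> M" and xc: "x \<in> evo_carrier"
        unfolding N_def by auto
      have "evo_scale c (x - evo_scale c1 (evo_basis j)) \<in> M"
        using E.subspace_scale[OF Ms c1] .
      moreover have "evo_scale c (x - evo_scale c1 (evo_basis j))
         = evo_scale c x - evo_scale (c * c1) (evo_basis j)"
        by (simp add: evo_scale_def fun_eq_iff algebra_simps)
      ultimately show "evo_scale c x \<in> N" unfolding N_def using carrier_scale[OF xc] by auto
    qed
    have Nmult: "evo_mult om a x \<in> N" if a: "a \<in> evo_carrier" and x: "x \<in> N" for a x :: "'i \<Rightarrow> 'k"
    proof -
      obtain c where c: "x - evo_scale c (evo_basis j) \<in> M" and xc: "x \<in> evo_carrier"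
        using x unfolding N_def by auto
      define m where "m = x - evo_scale c (evo_basis j)"
      define d where "d = c * a j / u j"
      have xm: "x = m + evo_scale c (evo_basis j)" by (simp add: m_def)
      have "evo_mult om a x = evo_mult om a m + evo_scale c (evo_mult om a (evo_basis j))"
        unfolding xm by (simp add: mult_add[OF a] mult_scale[OF a])
      also have "\<dots> = evo_mult om a m + evo_scale c (evo_scale (a j) (\<lambda>k. om k j))"
        by (simp add: basis_mult[OF a])
      finally have e1: "evo_mult om a x = \<dots>" .
      have "evo_mult om a x - evo_scale d (evo_basis j)
         = evo_mult om a m + evo_scale (- d) (evo_basis j - evo_scale (u j) (\<lambda>k. om k j))"
      proof -
        have du: "c * (a j * s) = d * (u j * s)" for s using uj by (simp add: d_def)
        show ?thesis unfolding e1 evo_scale_def fun_eq_iff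
          by (simp only: du minus_apply plus_fun_apply) (simp add: algebra_simps)
      qed
      also have "\<dots> \<in> M"
        using E.subspace_add[OF Ms Mm[OF a c[folded m_def]] E.subspace_scale[OF Ms stepa]] .
      finally show ?thesis unfolding N_def using mult_carrier[OF fin a] by auto
    qed
    have Nprop: "evo_proper_modular om N"
      unfolding evo_proper_modular_def evo_modular_ideal_def
    proof (intro conjI)
      show "evo_ideal om N" unfolding evo_ideal_def
      proof (intro conjI ballI)
        show "N \<subseteq> evo_carrier" unfolding N_def by auto
        show "E.subspace N" by (rule Nsub)
        fix a x :: "'i \<Rightarrow> 'k" assume a: "a \<in> evo_carrier" and x: "x \<in> N"
        show "evo_mult om a x \<in> N" using Nmult[OF a x] .
        have "x \<in> evo_carrier" using x unfolding N_def by auto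
        then show "evo_mult om x a \<in> N" using Nmult[OF a x] mult_comm[OF a, of x om] by simp
      qed
      show "\<exists>u. evo_modular_unit om N u"
        using uc ua MN by (auto simp: evo_modular_unit_def)
      show "N \<noteq> evo_carrier"
      proof
        assume "N = evo_carrier"
        then have "evo_basis i0 \<in> N" using carrier_basis by auto
        then obtain c where c: "evo_basis i0 - evo_scale c (evo_basis j) \<in> M"
          unfolding N_def by auto
        define m where "m = evo_basis i0 - evo_scale c (evo_basis j)"
        have mc: "m \<in> evo_carrier" using c Mc m_def by auto
        have mi: "m i0 = 1" using j by (simp add: m_def evo_basis_def evo_scale_def)
        have "evo_mult om (evo_basis i0) m = evo_mult om m (evo_basis i0)"
          by (rule mult_comm[OF carrier_basis mc])
        also have "\<dots> = evo_scale (m i0) (\<lambda>k. om k i0)" by (rule basis_mult[OF mc])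
        finally have "(\<lambda>k. om k i0) \<in> M"
          using Mm[OF carrier_basis c[folded m_def]] mi by (metis scale1)
        then have "(evo_basis i0 - evo_scale (u i0) (\<lambda>k. om k i0)) + evo_scale (u i0) (\<lambda>k. om k i0) \<in> M"
          using E.subspace_add[OF Ms stepa[of i0] E.subspace_scale[OF Ms]] by blast
        then show False using i0 by simp
      qed
    qed
    have "N = M" by (rule mxl[OF Nprop MN])
    then show False using jN ej by simp
  qed
  have HM: "H i0 \<subseteq> M"
  proof -
    have "E.span (evo_basis ` (UNIV - {i0})) \<subseteq> M"
      by (rule E.span_minimal[OF _ Ms]) (use cj in auto)
    then show ?thesis using span_H[of i0] by blast
  qed
  have MH: "M \<subseteq> H i0"
  proof
    fix x assume x: "x \<in> M"
    then have xc: "x \<in> evo_carrier" using Mc by auto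
    show "x \<in> H i0"
    proof (rule ccontr)
      assume "x \<notin> H i0"
      then have xi: "x i0 \<noteq> 0" using xc by auto
      have c1: "x - evo_scale (x i0) (evo_basis i0) \<in> evo_carrier"
        by (rule carrier_diff[OF xc carrier_scale[OF carrier_basis]])
      have "(x - evo_scale (x i0) (evo_basis i0)) i0 = 0"
        by (simp add: evo_scale_def evo_basis_def)
      then have "x - evo_scale (x i0) (evo_basis i0) \<in> M" using c1 HM by blast
      then have "x - (x - evo_scale (x i0) (evo_basis i0)) \<in> M"
        using E.subspace_diff[OF Ms x] by blast
      then have "evo_scale (x i0) (evo_basis i0) \<in> M" by simp
      then have "evo_scale (1 / x i0) (evo_scale (x i0) (evo_basis i0)) \<in> M"
        by (rule E.subspace_scale[OF Ms])
      then have "evo_scale 1 (evo_basis i0) \<in> M" using xi by simp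
      then show False using i0 by (simp add: scale1)
    qed
  qed
  have MeqH: "M = H i0" using HM MH by auto
  have w: "om i0 i0 \<noteq> 0"
  proof
    assume "om i0 i0 = 0"
    then have "(evo_basis i0 - evo_scale (u i0) (\<lambda>k. om k i0)) i0 = 1"
      by (simp add: evo_scale_def evo_basis_def)
    then show False using stepa[of i0] MeqH by auto
  qed
  have z: "om i0 k = 0" if k: "k \<noteq> i0" for k
  proof -
    have "evo_mult om (evo_basis k) (evo_basis k) \<in> M" using Mm[OF carrier_basis cj[OF k]] .
    moreover have "evo_mult om (evo_basis k) (evo_basis k) = evo_scale 1 (\<lambda>l. om l k)"
      using basis_mult[OF carrier_basis, of om k k] by (simp add: evo_basis_def)
    ultimately show ?thesis using MeqH by (simp add: scale1)
  qed
  show ?thesis using w z MeqH by blast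
qed

theorem corollary3p8:
  fixes om :: "'i \<Rightarrow> 'i \<Rightarrow> 'k::real_normed_field"
  assumes "\<forall>i. finite {k. om k i \<noteq> 0}"
  shows "(\<forall>M. evo_maximal_modular om M \<longleftrightarrow>
            (\<exists>i0. om i0 i0 \<noteq> 0 \<and> (\<forall>k. k \<noteq> i0 \<longrightarrow> i0 \<notin> descendents om k) \<and>
                  M = module.span evo_scale (evo_basis ` (UNIV - {i0}))))
       \<and> (\<forall>M i0. om i0 i0 \<noteq> 0 \<and> (\<forall>k. k \<noteq> i0 \<longrightarrow> i0 \<notin> descendents om k) \<and>
                  M = module.span evo_scale (evo_basis ` (UNIV - {i0}))
              \<longrightarrow> evo_modular_unit om M (evo_scale (1 / om i0 i0) (evo_basis i0)))
       \<and> (\<forall>M. evo_maximal_modular om M \<longrightarrow> evo_codim_one M)"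
proof (intro conjI allI impI)
  fix M :: "('i \<Rightarrow> 'k) set"
  show "evo_maximal_modular om M \<longleftrightarrow>
            (\<exists>i0. om i0 i0 \<noteq> 0 \<and> (\<forall>k. k \<noteq> i0 \<longrightarrow> i0 \<notin> descendents om k) \<and>
                  M = module.span evo_scale (evo_basis ` (UNIV - {i0})))"
  proof
    assume "evo_maximal_modular om M"
    then obtain i0 where w: "om i0 i0 \<noteq> 0" and z: "\<forall>k. k \<noteq> i0 \<longrightarrow> om i0 k = 0"
      and MH: "M = H i0"
      using forward[OF assms] by blast
    have d: "\<forall>k. k \<noteq> i0 \<longrightarrow> i0 \<notin> descendents om k"
      using desc_notin[of i0 om] z by blast
    have M2: "M = module.span evo_scale (evo_basis ` (UNIV - {i0}))"
      using MH span_H[of i0] by (rule trans[OF _ sym])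
    show "\<exists>i0. om i0 i0 \<noteq> 0 \<and> (\<forall>k. k \<noteq> i0 \<longrightarrow> i0 \<notin> descendents om k) \<and>
                  M = module.span evo_scale (evo_basis ` (UNIV - {i0}))"
      using w d M2 by blast
  next
    assume "\<exists>i0. om i0 i0 \<noteq> 0 \<and> (\<forall>k. k \<noteq> i0 \<longrightarrow> i0 \<notin> descendents om k) \<and>
                  M = module.span evo_scale (evo_basis ` (UNIV - {i0}))"
    then obtain i0 where w: "om i0 i0 \<noteq> 0" and d: "\<forall>k. k \<noteq> i0 \<longrightarrow> i0 \<notin> descendents om k"
      and M: "M = module.span evo_scale (evo_basis ` (UNIV - {i0}))" by blast
    have z: "\<forall>k. k \<noteq> i0 \<longrightarrow> om i0 k = 0" using desc_one[OF d] by blast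
    have MH: "M = H i0" using M span_H[of i0] by (rule trans)
    show "evo_maximal_modular om M" unfolding MH by (rule H_maximal[OF assms w z])
  qed
next
  fix M :: "('i \<Rightarrow> 'k) set" and i0
  assume h: "om i0 i0 \<noteq> 0 \<and> (\<forall>k. k \<noteq> i0 \<longrightarrow> i0 \<notin> descendents om k) \<and>
                  M = module.span evo_scale (evo_basis ` (UNIV - {i0}))"
  then have M: "M = H i0" using span_H[of i0] by (metis (no_types))
  show "evo_modular_unit om M (evo_scale (1 / om i0 i0) (evo_basis i0))"
    unfolding M using h by (intro unit_lemma[OF assms]) blast
next
  fix M :: "('i \<Rightarrow> 'k) set" assume "evo_maximal_modular om M"
  then obtain i0 where M: "M = H i0" using forward[OF assms] by blast
  show "evo_codim_one M" unfolding evo_codim_one_def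
  proof (intro bexI conjI ballI)
    show "evo_basis i0 \<in> evo_carrier" by (rule carrier_basis)
    show "evo_basis i0 \<notin> M" using M by (simp add: evo_basis_def)
    fix a :: "'i \<Rightarrow> 'k" assume a: "a \<in> evo_carrier"
    have c1: "a - evo_scale (a i0) (evo_basis i0) \<in> evo_carrier"
      by (rule carrier_diff[OF a carrier_scale[OF carrier_basis]])
    have "(a - evo_scale (a i0) (evo_basis i0)) i0 = 0"
      by (simp add: evo_scale_def evo_basis_def)
    then show "\<exists>c. a - evo_scale c (evo_basis i0) \<in> M" using c1 M by blast
  qed
qed

end
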